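(* Let $n\ge2$, $\epsilon=\pm$, and $\lambda=(\lambda_1\ge\lambda_2\ge\dots\ge\lambda_r\ge0)$ a partition of $n$ with $\lambda_1\le n/2$. Then the unipotent character $\psi^\lambda$ of $\mathrm{GL}^\epsilon_n(q)$ satisfies $\psi^\lambda(1)\ge q^{n^2/4}$.
   Context: $\mathrm{GL}^+_n(q)=\mathrm{GL}_n(q)$, $\mathrm{GL}^-_n(q)=\mathrm{GU}_n(q)$. Unipotent characters $\psi^\lambda$ are labeled by partitions $\lambda\vdash n$ in the standard way ($(n)$ trivial, $(1^n)$ Steinberg), with degree given by $\psi^\lambda(1)=q^{a(\lambda)}\prod_{i=1}^n(q^i-\epsilon^i)/\prod_h(q^{l(h)}-\epsilon^{l(h)})$, where $a(\lambda)=\sum_i(i-1)\lambda_i$, $h$ runs over the hooks of the Young diagram of $\lambda$ and $l(h)$ is the hook length. *)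

theory Defs
  imports Complex_Main "HOL-Computational_Algebra.Primes"
begin

text \<open>A partition of n: list of positive parts, weakly decreasing, summing to n.
  Parts are 0-indexed: lam ! 0 = lambda_1.\<close>
definition is_partition :: "nat list \<Rightarrow> nat \<Rightarrow> bool" where
  "is_partition lam n \<longleftrightarrow> sorted_wrt (\<ge>) lam \<and> (\<forall>x\<in>set lam. 0 < x) \<and> sum_list lam = n"

definition conj_part :: "nat list \<Rightarrow> nat \<Rightarrow> nat" where
  "conj_part lam j = card {i. i < length lam \<and> j < lam ! i}"

definition cells :: "nat list \<Rightarrow> (nat \<times> nat) set" where
  "cells lam = {(i, j). i < length lam \<and> j < lam ! i}"

text \<open>Hook length of the cell (i,j) (0-indexed): arm + leg + 1.\<close>
definition hook_length :: "nat list \<Rightarrow> nat \<times> nat \<Rightarrow> nat" where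
  "hook_length lam c = (case c of (i, j) \<Rightarrow> (lam ! i - j) + (conj_part lam j - i) - 1)"

text \<open>a(lambda) = sum_i (i-1) lambda_i with 1-indexed rows.\<close>
definition a_inv :: "nat list \<Rightarrow> nat" where
  "a_inv lam = (\<Sum>i<length lam. i * lam ! i)"

text \<open>Degree of the unipotent character psi^lambda of GL^eps_n(q), eps = 1 (GL) or -1 (GU).\<close>
definition unip_degree :: "real \<Rightarrow> real \<Rightarrow> nat list \<Rightarrow> real" where
  "unip_degree eps q lam =
     q ^ a_inv lam * (\<Prod>i\<in>{1..sum_list lam}. q ^ i - eps ^ i)
     / (\<Prod>c\<in>cells lam. q ^ hook_length lam c - eps ^ hook_length lam c)"

end

theory Submission
  imports Defs
begin

lemma conj_part_Nil[simp]: "conj_part [] j = 0"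
  by (simp add: conj_part_def)

lemma conj_part_Cons:
  "conj_part (x#mu) j = (if j < x then Suc (conj_part mu j) else conj_part mu j)"
proof -
  define S where "S = {i. i < length mu \<and> j < mu ! i}"
  have finS: "finite S" unfolding S_def by (rule finite_subset[of _ "{..<length mu}"]) auto
  have e: "{i. i < length (x#mu) \<and> j < (x#mu) ! i} =
        (if j < x then insert 0 (Suc ` S) else Suc ` S)"
  proof (rule set_eqI)
    fix i show "i \<in> {i. i < length (x#mu) \<and> j < (x#mu) ! i} \<longleftrightarrow> i \<in> (if j < x then insert 0 (Suc ` S) else Suc ` S)"
      by (cases i) (auto simp: S_def)
  qed
  have c: "card (Suc ` S) = card S" by (rule card_image) simp
  have "0 \<notin> Suc ` S" by auto
  then show ?thesis unfolding conj_part_def e S_def[symmetric] using c finS by simp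
qed

lemma conj_part_le_length: "conj_part mu j \<le> length mu"
  unfolding conj_part_def by (rule order.trans[OF card_mono[of "{..<length mu}"]]) auto

lemma sum_conj_part:
  assumes "\<forall>p\<in>set mu. p \<le> x"
  shows "(\<Sum>j<x. conj_part mu j) = sum_list mu"
  using assms
proof (induction mu)
  case Nil then show ?case by simp
next
  case (Cons p mu)
  have "(\<Sum>j<x. conj_part (p#mu) j) = (\<Sum>j<x. (if j < p then 1 else 0) + conj_part mu j)"
    by (rule sum.cong) (auto simp: conj_part_Cons)
  also have "\<dots> = (\<Sum>j<x. (if j < p then 1 else 0::nat)) + sum_list mu"
    using Cons by (simp add: sum.distrib)
  also have "(\<Sum>j<x. (if j < p then 1 else 0::nat)) = card ({..<x} \<inter> {..<p})"
    by (simp add: sum.If_cases lessThan_def)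
  also have "{..<x} \<inter> {..<p} = {..<p}" using Cons.prems by auto
  finally show ?case by simp
qed

lemma conj_part_antimono: "j \<le> j' \<Longrightarrow> conj_part mu j' \<le> conj_part mu j"
  unfolding conj_part_def by (rule card_mono) auto

lemma a_inv_Cons: "a_inv (x#mu) = a_inv mu + sum_list mu"
proof -
  have "a_inv (x#mu) = (\<Sum>i<Suc (length mu). i * (x#mu) ! i)" by (simp add: a_inv_def)
  also have "\<dots> = (\<Sum>i<length mu. Suc i * mu ! i)"
    by (subst sum.lessThan_Suc_shift) simp
  also have "\<dots> = a_inv mu + (\<Sum>i<length mu. mu ! i)"
    by (simp add: a_inv_def sum.distrib)
  finally show ?thesis by (simp add: sum_list_sum_nth atLeast0LessThan)
qed

lemma cells_Cons:
  "cells (x#mu) = (\<lambda>j. (0,j)) ` {..<x} \<union> (\<lambda>(i,j). (Suc i, j)) ` cells mu"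
  unfolding cells_def
  by (auto simp: image_iff nth_Cons split: nat.splits)

lemma finite_cells: "finite (cells mu)"
proof -
  have "cells mu = (\<Union>i<length mu. {i} \<times> {..<mu ! i})" unfolding cells_def by auto
  then show ?thesis by simp
qed

definition phi :: "real \<Rightarrow> nat \<Rightarrow> real" where "phi t k = 1 - t ^ k"

definition Rr :: "real \<Rightarrow> nat \<Rightarrow> nat list \<Rightarrow> real" where
  "Rr t x mu = (\<Prod>j<x. phi t (sum_list mu + x - j) / phi t (x - j + conj_part mu j))"

lemma hook_Cons_Suc:
  assumes "sorted_wrt (\<ge>) (x#mu)" "(i,j) \<in> cells mu"
  shows "hook_length (x#mu) (Suc i, j) = hook_length mu (i,j)"
proof -
  have "mu ! i \<in> set mu" using assms(2) by (auto simp: cells_def)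
  then have "mu ! i \<le> x" using assms(1) by auto
  then have "j < x" using assms(2) by (auto simp: cells_def)
  then show ?thesis by (simp add: hook_length_def conj_part_Cons)
qed

lemma hook_Cons_0: "j < x \<Longrightarrow> hook_length (x#mu) (0, j) = x - j + conj_part mu j"
  by (simp add: hook_length_def conj_part_Cons)

lemma prod_split_range:
  fixes f :: "nat \<Rightarrow> 'a::comm_monoid_mult"
  shows "(\<Prod>i\<in>{1..s+x}. f i) = (\<Prod>i\<in>{1..s}. f i) * (\<Prod>j<x. f (s + x - j))"
proof (induction x)
  case 0 then show ?case by simp
next
  case (Suc x)
  have "{1..s + Suc x} = insert (s + Suc x) {1..s+x}" by auto
  then have "(\<Prod>i\<in>{1..s+Suc x}. f i) = f (s + Suc x) * (\<Prod>i\<in>{1..s+x}. f i)" by simp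
  also have "(\<Prod>j<Suc x. f (s + Suc x - j)) = f (s + Suc x) * (\<Prod>j<x. f (s + x - j))"
    by (subst prod.lessThan_Suc_shift) simp
  ultimately show ?case using Suc by (simp add: mult_ac)
qed

lemma unip_Nil: "unip_degree eps q [] = 1"
  by (simp add: unip_degree_def a_inv_def cells_def)

lemma G_eq: "(q::real) \<noteq> 0 \<Longrightarrow> q ^ k - eps ^ k = q ^ k * phi (eps / q) k"
  by (simp add: phi_def power_divide field_simps)

lemma field_aux: "(a::real) * b = e * d \<Longrightarrow> d \<noteq> 0 \<Longrightarrow> a * (b * P / (d * Q)) = e * (P / Q)"
proof -
  assume h: "a * b = e * d" "d \<noteq> 0"
  have "a * (b * P / (d * Q)) = (a * b) * P / (d * Q)" by (simp add: mult.assoc)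
  also have "\<dots> = (e * d) * P / (d * Q)" using h(1) by simp
  also have "\<dots> = e * (P / Q)" using h(2) by simp
  finally show ?thesis .
qed

lemma field_aux2: "(q::real) ^ (a + s) * (X * A) / (B * Y) = q ^ s * (A / B) * (q ^ a * X / Y)"
  by (simp add: power_add)

lemma unip_Cons:
  assumes "sorted_wrt (\<ge>) (x#mu)" "\<forall>p\<in>set mu. 0 < p" "(q::real) \<noteq> 0"
  shows "unip_degree eps q (x#mu) = q ^ (x * sum_list mu) * Rr (eps/q) x mu * unip_degree eps q mu"
proof -
  define s where "s = sum_list mu"
  define G where "G k = q ^ k - eps ^ k" for k
  define c where "c j = conj_part mu j" for j
  have sx: "sum_list (x#mu) = s + x" by (simp add: s_def)
  have P1: "(\<Prod>i\<in>{1..sum_list (x#mu)}. G i) = (\<Prod>i\<in>{1..s}. G i) * (\<Prod>j<x. G (s + x - j))"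
    unfolding sx by (rule prod_split_range)
  have disj: "(\<lambda>j. (0::nat,j)) ` {..<x} \<inter> (\<lambda>(i,j). (Suc i, j)) ` cells mu = {}" by auto
  have inj1: "inj_on (\<lambda>j. (0::nat,j)) {..<x}" by (auto simp: inj_on_def)
  have inj2: "inj_on (\<lambda>(i,j). (Suc i, j)) (cells mu)" by (auto simp: inj_on_def)
  have P2: "(\<Prod>c\<in>cells (x#mu). G (hook_length (x#mu) c)) =
     (\<Prod>j<x. G (x - j + c j)) * (\<Prod>c\<in>cells mu. G (hook_length mu c))"
  proof -
    have "(\<Prod>cc\<in>cells (x#mu). G (hook_length (x#mu) cc)) =
      (\<Prod>cc\<in>(\<lambda>j. (0,j)) ` {..<x}. G (hook_length (x#mu) cc)) *
      (\<Prod>cc\<in>(\<lambda>(i,j). (Suc i, j)) ` cells mu. G (hook_length (x#mu) cc))"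
      unfolding cells_Cons by (rule prod.union_disjoint) (auto simp: finite_cells)
    also have "(\<Prod>cc\<in>(\<lambda>j. (0,j)) ` {..<x}. G (hook_length (x#mu) cc)) = (\<Prod>j<x. G (x - j + c j))"
      by (subst prod.reindex[OF inj1]) (auto intro!: prod.cong simp: hook_Cons_0 c_def)
    also have "(\<Prod>cc\<in>(\<lambda>(i,j). (Suc i, j)) ` cells mu. G (hook_length (x#mu) cc)) =
               (\<Prod>c\<in>cells mu. G (hook_length mu c))"
      by (subst prod.reindex[OF inj2]) (auto intro!: prod.cong simp: hook_Cons_Suc[OF assms(1)])
    finally show ?thesis .
  qed
  have D0: "unip_degree eps q (x#mu) = q ^ (a_inv mu + s) * ((\<Prod>i\<in>{1..s}. G i) * (\<Prod>j<x. G (s + x - j)))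
      / ((\<Prod>j<x. G (x - j + c j)) * (\<Prod>c\<in>cells mu. G (hook_length mu c)))"
  proof -
    have "unip_degree eps q (x#mu) = q ^ (a_inv (x#mu)) * (\<Prod>i\<in>{1..sum_list (x#mu)}. G i)
           / (\<Prod>c\<in>cells (x#mu). G (hook_length (x#mu) c))"
      by (simp add: unip_degree_def G_def)
    then show ?thesis by (simp only: P1 P2 a_inv_Cons s_def)
  qed
  have Dmu: "unip_degree eps q mu = q ^ (a_inv mu) * (\<Prod>i\<in>{1..s}. G i)
           / (\<Prod>c\<in>cells mu. G (hook_length mu c))"
    by (simp add: unip_degree_def G_def s_def)
  have D1: "unip_degree eps q (x#mu) = q ^ s * ((\<Prod>j<x. G (s + x - j)) / (\<Prod>j<x. G (x - j + c j)))
      * unip_degree eps q mu"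
    unfolding D0 Dmu by (rule field_aux2)
  have A: "(\<Prod>j<x. G (s + x - j)) = q ^ (\<Sum>j<x. s + x - j) * (\<Prod>j<x. phi (eps/q) (s + x - j))"
    unfolding G_def using assms(3) by (simp add: G_eq power_sum prod.distrib)
  have B: "(\<Prod>j<x. G (x - j + c j)) = q ^ (\<Sum>j<x. x - j + c j) * (\<Prod>j<x. phi (eps/q) (x - j + c j))"
    unfolding G_def using assms(3) by (simp add: G_eq power_sum prod.distrib)
  have sc: "(\<Sum>j<x. c j) = s"
    unfolding c_def s_def by (rule sum_conj_part) (use assms(1) in auto)
  have e1: "(\<Sum>j<x. s + x - j) = x * s + (\<Sum>j<x. x - j)"
  proof -
    have "(\<Sum>j<x. s + x - j) = (\<Sum>j<x. s + (x - j))" by (rule sum.cong) auto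
    then show ?thesis using sum.distrib[of "\<lambda>j. s" "\<lambda>j. x - j" "{..<x}"] by (simp add: mult.commute)
  qed
  have e2: "(\<Sum>j<x. x - j + c j) = (\<Sum>j<x. x - j) + s"
    by (simp only: sum.distrib sc)
  have ex: "q ^ s * q ^ (\<Sum>j<x. s + x - j) = q ^ (x * s) * q ^ (\<Sum>j<x. x - j + c j)"
    unfolding e1 e2 power_add[symmetric] by (simp add: algebra_simps)
  have "q ^ s * ((\<Prod>j<x. G (s + x - j)) / (\<Prod>j<x. G (x - j + c j))) = q ^ (x*s) * Rr (eps/q) x mu"
    unfolding A B Rr_def prod_dividef c_def[symmetric] s_def[symmetric]
    by (rule field_aux[OF ex]) (use assms(3) in simp)
  then show ?thesis using D1 by (simp add: s_def)
qed

lemma phi_even: "even k \<Longrightarrow> phi (- r) k = 1 - r ^ k"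
  by (simp add: phi_def)
lemma phi_odd: "odd k \<Longrightarrow> phi (- r) k = 1 + r ^ k"
  by (simp add: phi_def)
lemma pair_le1:
  assumes "0 < r" "r \<le> 1/2" "even e"
  shows "phi (-r) e * phi (-r) (Suc e) \<le> 1"
proof -
  define u where "u = r ^ e"
  have u0: "0 \<le> u" using assms by (simp add: u_def)
  have a: "phi (-r) e = 1 - u" using assms by (simp add: phi_even u_def)
  have b: "phi (-r) (Suc e) = 1 + r * u" using assms by (simp add: phi_odd u_def)
  have eq: "phi (-r) e * phi (-r) (Suc e) = 1 - (u * (1 - r) + r * (u * u))"
    unfolding a b by (simp add: algebra_simps)
  have "0 \<le> u * (1 - r)" using u0 assms by simp
  moreover have "0 \<le> r * (u * u)" using u0 assms by simp
  ultimately show ?thesis unfolding eq by linarith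
qed
lemma phi_pos: "\<bar>t\<bar> < 1 \<Longrightarrow> k \<ge> 1 \<Longrightarrow> phi t k > 0"
proof -
  assume "\<bar>t\<bar> < 1" "k \<ge> 1"
  then have "\<bar>t ^ k\<bar> < 1" by (simp add: power_abs power_less_one_iff)
  then show ?thesis by (simp add: phi_def)
qed

lemma phi_ge_even_bound:
  assumes "0 < r" "r \<le> 1/2" "k \<ge> 1"
  shows "phi (- r) k \<ge> 1 - (if even k then r ^ k else 0)"
  using assms by (cases "even k") (auto simp: phi_even phi_odd)

lemma pair_ge1:
  assumes "0 < r" "r \<le> 1/2" "odd m"
  shows "phi (-r) m * phi (-r) (Suc m) \<ge> 1"
proof -
  define u where "u = r ^ m"
  have u0: "0 \<le> u" using assms by (simp add: u_def)
  have u1: "u \<le> 1" using assms by (simp add: u_def power_le_one)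
  have a: "phi (-r) m = 1 + u" using assms by (simp add: phi_odd u_def)
  have b: "phi (-r) (Suc m) = 1 - r * u" using assms by (simp add: phi_even u_def)
  have eq: "phi (-r) m * phi (-r) (Suc m) = 1 + u * (1 - r - r * u)"
    unfolding a b by (simp add: algebra_simps)
  have "r * u \<le> r * 1" using u1 assms by (intro mult_left_mono) auto
  then have "0 \<le> 1 - r - r * u" using assms by linarith
  then have "0 \<le> u * (1 - r - r * u)" using u0 by simp
  then show ?thesis unfolding eq by linarith
qed

lemma pair_mono:
  assumes "0 < r" "r \<le> 1/2" "even e"
  shows "phi (-r) (e + d) * phi (-r) (Suc (e + d)) \<ge> phi (-r) e * phi (-r) (Suc e)"
proof (cases "even d")
  case True
  define u where "u = r ^ e"
  define w where "w = r ^ (e + d)"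
  have wu: "w \<le> u" unfolding u_def w_def using assms by (simp add: power_decreasing)
  have w0: "0 \<le> w" unfolding w_def using assms by simp
  have "phi (-r) (e + d) = 1 - w" using assms True by (simp add: phi_even w_def)
  moreover have "phi (-r) (Suc (e + d)) = 1 + r * w" using assms True by (simp add: phi_odd w_def)
  moreover have "phi (-r) e = 1 - u" using assms by (simp add: phi_even u_def)
  moreover have "phi (-r) (Suc e) = 1 + r * u" using assms by (simp add: phi_odd u_def)
  moreover have "(1 - w) * (1 + r * w) \<ge> (1 - u) * (1 + r * u)"
  proof -
    have "(1 - w) * (1 + r * w) - (1 - u) * (1 + r * u) = (u - w) * (1 - r) + r * (u*u - w*w)"
      by (simp add: algebra_simps)
    moreover have "(u - w) * (1 - r) \<ge> 0" using wu assms by simp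
    moreover have "r * (u*u - w*w) \<ge> 0" using wu w0 assms by (simp add: mult_mono)
    ultimately show ?thesis by linarith
  qed
  ultimately show ?thesis by simp
next
  case False
  then have "odd (e + d)" using assms by simp
  then have "phi (-r) (e + d) * phi (-r) (Suc (e + d)) \<ge> 1" using pair_ge1 assms by blast
  moreover have "phi (-r) e * phi (-r) (Suc e) \<le> 1" using pair_le1 assms by blast
  ultimately show ?thesis by linarith
qed

lemma phi_pos_r: "0 < r \<Longrightarrow> r \<le> 1/2 \<Longrightarrow> k \<ge> 1 \<Longrightarrow> phi (-r) k > 0"
  by (rule phi_pos) auto

lemma shift_prod:
  assumes "0 < r" "r \<le> 1/2"
  shows "even a \<Longrightarrow> a \<ge> 2 \<Longrightarrow> (\<Prod>k<L. phi (-r) (a + d + k)) \<ge> (\<Prod>k<L. phi (-r) (a + k))"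
proof (induction L arbitrary: a rule: less_induct)
  case (less L)
  show ?case
  proof (cases L)
    case 0 then show ?thesis by simp
  next
    case (Suc L1)
    show ?thesis
    proof (cases L1)
      case 0
      have "phi (-r) (a + d) \<ge> phi (-r) a"
      proof (cases "even d")
        case True
        then have "r ^ (a + d) \<le> r ^ a" using assms by (simp add: power_decreasing)
        then show ?thesis using True less.prems by (simp add: phi_even)
      next
        case False
        have "0 \<le> r ^ a" "0 \<le> r ^ (a + d)" using assms by auto
        moreover have "phi (-r) a = 1 - r ^ a" using less.prems by (simp add: phi_even)
        moreover have "phi (-r) (a + d) = 1 + r ^ (a + d)" using less.prems False by (simp add: phi_odd)
        ultimately show ?thesis by linarith
      qed
      then show ?thesis using Suc 0 by simp
    next
      case (Suc L2)
      have sp: "\<And>f. (\<Prod>k<L. f k) = f 0 * (f (Suc 0) * (\<Prod>k<L2. f (Suc (Suc k))))"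
        using \<open>L = Suc L1\<close> Suc by (simp only: prod.lessThan_Suc_shift)
      have ih: "(\<Prod>k<L2. phi (-r) ((a+2) + d + k)) \<ge> (\<Prod>k<L2. phi (-r) ((a+2) + k))"
        using less.IH[of L2 "a+2"] less.prems \<open>L = Suc L1\<close> Suc by simp
      have pm: "phi (-r) (a + d) * phi (-r) (a + d + 1) \<ge> phi (-r) a * phi (-r) (a + 1)"
        using pair_mono[OF assms less.prems(1), of d] by simp
      have p1: "0 \<le> phi (-r) a * phi (-r) (a + 1)"
        using phi_pos_r[OF assms] less.prems by (simp add: less_imp_le)
      have p2: "0 \<le> (\<Prod>k<L2. phi (-r) ((a+2) + k))"
        by (intro prod_nonneg less_imp_le phi_pos_r[OF assms]) simp
      have "(\<Prod>k<L. phi (-r) (a + k)) = (phi (-r) a * phi (-r) (a + 1)) * (\<Prod>k<L2. phi (-r) ((a+2) + k))"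
        by (subst sp) (simp add: add.assoc add.commute)
      also have "\<dots> \<le> (phi (-r) (a + d) * phi (-r) (a + d + 1)) * (\<Prod>k<L2. phi (-r) ((a+2) + d + k))"
        by (rule mult_mono[OF pm ih]) (use p1 p2 pm in auto)
      also have "\<dots> = (\<Prod>k<L. phi (-r) (a + d + k))"
        by (subst sp) (simp add: algebra_simps)
      finally show ?thesis .
    qed
  qed
qed

lemma even_start_ub:
  assumes "0 < r" "r \<le> 1/2"
  shows "even a \<Longrightarrow> a \<ge> 2 \<Longrightarrow> (\<Prod>k<L. phi (-r) (a + k)) \<le> 1 + r ^ (a + 1)"
proof (induction L arbitrary: a rule: less_induct)
  case (less L)
  have rpos: "0 \<le> r ^ n" for n using assms by simp
  show ?case
  proof (cases L)
    case 0 then show ?thesis using rpos[of "a+1"] by simp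
  next
    case (Suc L1)
    show ?thesis
    proof (cases L1)
      case 0
      then show ?thesis using Suc less.prems rpos[of a] rpos[of "a+1"] by (simp add: phi_even)
    next
      case (Suc L2)
      have sp0: "\<And>f. (\<Prod>k<L. f k) = f 0 * (f (Suc 0) * (\<Prod>k<L2. f (Suc (Suc k))))"
        using \<open>L = Suc L1\<close> Suc by (simp only: prod.lessThan_Suc_shift)
      have sp: "(\<Prod>k<L. phi (-r) (a + k)) = (phi (-r) a * phi (-r) (Suc a)) * (\<Prod>k<L2. phi (-r) ((a+2) + k))"
        by (subst sp0) (simp add: add.commute add.left_commute)
      have ih: "(\<Prod>k<L2. phi (-r) ((a+2) + k)) \<le> 1 + r ^ (a + 2 + 1)"
        using less.IH[of L2 "a+2"] less.prems \<open>L = Suc L1\<close> Suc by simp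
      have p2: "0 \<le> (\<Prod>k<L2. phi (-r) ((a+2) + k))"
        by (intro prod_nonneg less_imp_le phi_pos_r[OF assms]) simp
      have p1: "0 \<le> phi (-r) a * phi (-r) (Suc a)"
        using phi_pos_r[OF assms] less.prems by (simp add: less_imp_le)
      have "(phi (-r) a * phi (-r) (Suc a)) * (\<Prod>k<L2. phi (-r) ((a+2) + k)) \<le> 1 * (1 + r ^ (a + 2 + 1))"
        by (rule mult_mono[OF pair_le1[OF assms less.prems(1)] ih]) (use p2 in auto)
      also have "\<dots> \<le> 1 + r ^ (a + 1)"
      proof -
        have "r ^ (a + 2 + 1) \<le> r ^ (a + 1)" by (rule power_decreasing) (use assms in auto)
        then show ?thesis by simp
      qed
      finally show ?thesis using sp by simp
    qed
  qed
qed

lemma LV: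
  fixes r :: real
  assumes "finite V" "\<forall>v\<in>V. v \<ge> 1" "0 < r" "r \<le> 1/2"
  shows "(\<Prod>v\<in>V. phi (-r) v) \<ge> 1 - (\<Sum>v\<in>{v\<in>V. even v}. r ^ v)"
  using assms(1,2)
proof (induction V rule: finite_induct)
  case empty then show ?case by simp
next
  case (insert a V)
  define P where "P = (\<Prod>v\<in>V. phi (-r) v)"
  define S where "S = (\<Sum>v\<in>{v\<in>V. even v}. r ^ v)"
  have IH: "P \<ge> 1 - S" using insert unfolding P_def S_def by auto
  have P0: "0 \<le> P" unfolding P_def
    by (rule prod_nonneg, rule less_imp_le, rule phi_pos_r[OF assms(3,4)]) (use insert.prems in auto)
  have S0: "0 \<le> S" unfolding S_def using assms(3) by (intro sum_nonneg) auto
  have fin: "finite {v\<in>V. even v}" using insert by auto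
  have pr: "(\<Prod>v\<in>insert a V. phi (-r) v) = phi (-r) a * P"
    unfolding P_def using insert by simp
  show ?case
  proof (cases "even a")
    case True
    have "{v\<in>insert a V. even v} = insert a {v\<in>V. even v}" using True by auto
    then have sm: "(\<Sum>v\<in>{v\<in>insert a V. even v}. r ^ v) = r ^ a + S"
      unfolding S_def using fin insert by simp
    have ph: "phi (-r) a = 1 - r ^ a" using True by (simp add: phi_even)
    have ra: "r ^ a \<le> 1" "0 \<le> r ^ a" using assms by (auto simp: power_le_one)
    have "(1 - r ^ a) * (1 - S) \<le> (1 - r ^ a) * P" using IH ra by (intro mult_left_mono) auto
    moreover have "(1 - r ^ a) * (1 - S) = 1 - r ^ a - S + r ^ a * S" by (simp add: algebra_simps)
    moreover have "0 \<le> r ^ a * S" using ra S0 by simp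
    ultimately show ?thesis unfolding pr sm ph by linarith
  next
    case False
    have "{v\<in>insert a V. even v} = {v\<in>V. even v}" using False by auto
    then have sm: "(\<Sum>v\<in>{v\<in>insert a V. even v}. r ^ v) = S" unfolding S_def by simp
    have ph: "phi (-r) a = 1 + r ^ a" using False by (simp add: phi_odd)
    have "P \<le> (1 + r ^ a) * P" using P0 assms by (simp add: algebra_simps)
    then show ?thesis unfolding pr sm ph using IH by linarith
  qed
qed

lemma geom_le:
  fixes y :: real and N :: nat
  assumes "0 \<le> y" "y < 1"
  shows "(\<Sum>k\<in>{1..N}. y ^ k) \<le> y / (1 - y)"
proof -
  have "(1 - y) * (\<Sum>k\<in>{1..N}. y ^ k) = y - y ^ Suc N"
  proof (induction N)
    case 0 then show ?case by (simp add: algebra_simps)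
  next
    case (Suc N)
    define S where "S = (\<Sum>k\<in>{1..N}. y ^ k)"
    have "{1..Suc N} = insert (Suc N) {1..N}" by auto
    then have "(\<Sum>k\<in>{1..Suc N}. y ^ k) = y ^ Suc N + S" by (simp add: S_def)
    moreover have "(1 - y) * S = y - y ^ Suc N" using Suc by (simp add: S_def)
    moreover have "(1 - y) * (y ^ Suc N + S) = y ^ Suc N - y ^ Suc (Suc N) + (1 - y) * S"
      by (simp add: algebra_simps)
    ultimately show ?case by (simp add: add.commute)
  qed
  moreover have "0 \<le> y ^ Suc N" using assms by simp
  ultimately have "(1 - y) * (\<Sum>k\<in>{1..N}. y ^ k) \<le> y" by linarith
  then show ?thesis using assms by (simp add: field_simps)
qed

lemma GS:
  fixes r :: real
  assumes "V \<subseteq> {1..N}" "0 < r" "r < 1"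
  shows "(\<Sum>v\<in>{v\<in>V. even v}. r ^ v) \<le> r^2 / (1 - r^2)"
proof -
  define W where "W = {v\<in>V. even v}"
  have inj: "inj_on (\<lambda>v. v div 2) W" unfolding W_def by (auto simp: inj_on_def elim!: evenE)
  have "(\<Sum>v\<in>W. r ^ v) = (\<Sum>v\<in>W. (r^2) ^ (v div 2))"
  proof (rule sum.cong)
    fix v assume "v \<in> W"
    then obtain b where "v = 2 * b" unfolding W_def by (auto elim!: evenE)
    then show "r ^ v = (r^2) ^ (v div 2)" by (simp add: power_mult)
  qed simp
  also have "\<dots> = (\<Sum>k\<in>(\<lambda>v. v div 2) ` W. (r^2) ^ k)"
    by (simp add: sum.reindex[OF inj])
  also have "\<dots> \<le> (\<Sum>k\<in>{1..N}. (r^2) ^ k)"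
    by (rule sum_mono2) (use assms in \<open>auto simp: W_def elim!: evenE\<close>)
  also have "\<dots> \<le> r^2 / (1 - r^2)"
    by (rule geom_le) (use assms in \<open>auto simp: power_less_one_iff\<close>)
  finally show ?thesis unfolding W_def .
qed

lemma odd3_ub:
  assumes "0 < r" "r \<le> 1/2"
  shows "(\<Prod>k<L. phi (-r) (3 + k)) \<le> (1 + r^3) * (1 + r^5)"
proof (cases L)
  case 0
  have "0 \<le> r^3" "0 \<le> r^5" using assms by auto
  then have "1 \<le> (1 + r^3) * (1 + r^5)" by (simp add: algebra_simps)
  then show ?thesis using 0 by simp
next
  case (Suc L1)
  have "(\<Prod>k<L. phi (-r) (3 + k)) = phi (-r) 3 * (\<Prod>k<L1. phi (-r) (4 + k))"
    unfolding Suc by (simp only: prod.lessThan_Suc_shift) (simp add: add.commute)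
  also have "\<dots> \<le> (1 + r^3) * (1 + r^(4+1))"
  proof (rule mult_mono)
    show "(\<Prod>k<L1. phi (-r) (4 + k)) \<le> 1 + r^(4+1)" by (rule even_start_ub[OF assms]) auto
    show "phi (-r) 3 \<le> 1 + r^3" by (simp add: phi_odd)
    show "0 \<le> 1 + r^3" using assms by simp
    show "0 \<le> (\<Prod>k<L1. phi (-r) (4 + k))"
      by (rule prod_nonneg, rule less_imp_le, rule phi_pos_r[OF assms]) auto
  qed
  finally show ?thesis by simp
qed

lemma UB:
  assumes "0 < r" "r \<le> 1/2" "s \<ge> 2"
  shows "(\<Prod>i\<in>{1..s}. phi (-r) i) \<le> (1 + r) * (1 - r^2) * ((1 + r^3) * (1 + r^5))"
proof -
  obtain s' where s: "s = Suc (Suc s')" using assms(3) by (metis add_2_eq_Suc le_Suc_ex)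
  have "(\<Prod>i\<in>{1..s}. phi (-r) i) = (\<Prod>k<s. phi (-r) (Suc k))"
    using prod.atLeast1_atMost_eq[of "phi (-r)" s] by simp
  also have "\<dots> = phi (-r) 1 * phi (-r) 2 * (\<Prod>k<s'. phi (-r) (3 + k))"
    unfolding s by (simp only: prod.lessThan_Suc_shift) (simp add: mult.assoc add.commute numeral_3_eq_3 numeral_2_eq_2)
  also have "\<dots> \<le> phi (-r) 1 * phi (-r) 2 * ((1 + r^3) * (1 + r^5))"
    by (rule mult_left_mono[OF odd3_ub[OF assms(1,2)]])
       (use phi_pos_r[OF assms(1,2)] in \<open>auto intro!: mult_nonneg_nonneg less_imp_le\<close>)
  also have "phi (-r) 1 * phi (-r) 2 = (1 + r) * (1 - r^2)" by (simp add: phi_def)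
  finally show ?thesis .
qed

lemma numeric:
  assumes "q = 2 \<or> q \<ge> (3::real)"
  shows "q * (1 - (1/q)^2 / (1 - (1/q)^2)) \<ge> (1 + 1/q) * (1 - (1/q)^2) * ((1 + (1/q)^3) * (1 + (1/q)^5))"
  using assms
proof
  assume "q = 2" then show ?thesis by (simp add: power_divide)
next
  assume q3: "q \<ge> 3"
  define r where "r = 1/q"
  have r0: "0 < r" and r3: "r \<le> 1/3" using q3 by (auto simp: r_def field_simps)
  have "r^2 \<le> (1/3)^2" using r0 r3 by (intro power_mono) auto
  moreover have "(1/3::real)^2 = 1/9" by (simp add: power2_eq_square)
  ultimately have r2: "r^2 \<le> 1/9" by simp
  have "r^2 / (1 - r^2) \<le> 1/8" using r2 r0 by (simp add: field_simps)
  then have L: "q * (1 - r^2 / (1 - r^2)) \<ge> q * (7/8)" using q3 by (intro mult_left_mono) auto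
  have a: "1 + r \<le> 4/3" using r3 by simp
  have b: "1 - r^2 \<le> 1" "0 \<le> 1 - r^2" using r2 r0 by auto
  have "r^3 \<le> r" using r0 r3 by (simp add: power_le_one power_decreasing[of 1 3 r, simplified])
  then have c: "1 + r^3 \<le> 4/3" using r3 by simp
  have "r^5 \<le> r" using r0 r3 by (simp add: power_le_one power_decreasing[of 1 5 r, simplified])
  then have d: "1 + r^5 \<le> 4/3" using r3 by simp
  have pos: "0 \<le> r^3" "0 \<le> r^5" using r0 by auto
  have "(1 + r) * (1 - r^2) * ((1 + r^3) * (1 + r^5)) \<le> (4/3) * 1 * ((4/3) * (4/3))"
    using a b c d pos r0 by (intro mult_mono) auto
  then have "(1 + r) * (1 - r^2) * ((1 + r^3) * (1 + r^5)) \<le> q * (1 - r^2 / (1 - r^2))"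
    using L q3 by linarith
  then show ?thesis unfolding r_def .
qed

lemma length_le_sum: "\<forall>p\<in>set mu. 0 < (p::nat) \<Longrightarrow> length mu \<le> sum_list mu"
  by (induction mu) auto

lemma Rr_Nil: assumes "\<bar>t\<bar> < 1" shows "Rr t x [] = 1"
  unfolding Rr_def
proof (rule prod.neutral, rule ballI)
  fix j assume "j \<in> {..<x}"
  then have "phi t (x - j) > 0" by (intro phi_pos) (use assms in auto)
  then show "phi t (sum_list [] + x - j) / phi t (x - j + conj_part [] j) = 1" by simp
qed

lemma Rr_one:
  assumes "\<forall>p\<in>set mu. p = 1" "\<bar>t\<bar> < 1"
  shows "Rr t 1 mu = 1"
proof -
  have s: "sum_list mu = length mu" using assms by (induction mu) auto
  have "{i. i < length mu \<and> 0 < mu ! i} = {..<length mu}" using assms(1) nth_mem by fastforce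
  then have c: "conj_part mu 0 = length mu" unfolding conj_part_def by simp
  have "phi t (Suc (length mu)) > 0" by (intro phi_pos) (use assms in auto)
  then show ?thesis unfolding Rr_def using s c by simp
qed

lemma Rr_GL:
  assumes "(q::real) \<ge> 2" "\<forall>p\<in>set mu. 0 < p"
  shows "Rr (1/q) x mu \<ge> 1"
  unfolding Rr_def
proof (rule prod_ge_1)
  fix j assume j: "j \<in> {..<x}"
  have t: "\<bar>1/q\<bar> < 1" "0 < 1/q" "1/q < 1" using assms by auto
  have c: "conj_part mu j \<le> sum_list mu"
    using conj_part_le_length[of mu j] length_le_sum[OF assms(2)] by linarith
  have le: "x - j + conj_part mu j \<le> sum_list mu + x - j" using c j by auto
  have pos: "phi (1/q) (x - j + conj_part mu j) > 0" by (intro phi_pos) (use t j in auto)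
  have "(1/q) ^ (sum_list mu + x - j) \<le> (1/q) ^ (x - j + conj_part mu j)"
    by (rule power_decreasing[OF le]) (use t in auto)
  then have "phi (1/q) (x - j + conj_part mu j) \<le> phi (1/q) (sum_list mu + x - j)"
    by (simp add: phi_def)
  then show "1 \<le> phi (1/q) (sum_list mu + x - j) / phi (1/q) (x - j + conj_part mu j)"
    using pos by simp
qed

lemma R_unitary:
  assumes srt: "sorted_wrt (\<ge>) (x#mu)" and pos: "\<forall>p\<in>set mu. 0 < p" and ne: "mu \<noteq> []"
    and q: "q = 2 \<or> q \<ge> (3::real)"
  shows "q * Rr (-(1/q)) x mu \<ge> 1"
proof -
  define r where "r = 1/q"
  have r0: "0 < r" and r2: "r \<le> 1/2" using q by (auto simp: r_def)
  have qr: "q * r = 1" using q by (auto simp: r_def)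
  have q2: "q \<ge> 2" using q by auto
  define s where "s = sum_list mu"
  have s1: "s \<ge> 1" using ne pos unfolding s_def by (cases mu) auto
  define c where "c j = conj_part mu j" for j
  define h where "h j = x - j + c j" for j
  define f where "f k = phi (-r) k" for k
  have fpos: "f k > 0" if "k \<ge> 1" for k unfolding f_def by (rule phi_pos_r[OF r0 r2 that])
  have cs: "c j \<le> s" for j using conj_part_le_length[of mu j] length_le_sum[OF pos] by (simp add: c_def s_def)
  have anti: "c j' \<le> c j" if "j \<le> j'" for j j' unfolding c_def by (rule conj_part_antimono[OF that])
  have inj: "inj_on h {..<x}"
  proof (rule inj_onI)
    fix j j' assume jj: "j \<in> {..<x}" "j' \<in> {..<x}" "h j = h j'"
    show "j = j'"
    proof (cases j j' rule: linorder_cases)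
      case less then show ?thesis using anti[of j j'] jj unfolding h_def by auto
    next
      case greater then show ?thesis using anti[of j' j] jj unfolding h_def by auto
    qed
  qed
  define N where "N = s + x"
  define U where "U = h ` {..<x}"
  have UN: "U \<subseteq> {1..N}"
  proof
    fix u assume "u \<in> U"
    then obtain j where j: "j < x" "u = h j" unfolding U_def by auto
    moreover have "c j \<le> s" by (rule cs)
    ultimately show "u \<in> {1..N}" unfolding h_def N_def by auto
  qed
  define V where "V = {1..N} - U"
  have finU: "finite U" unfolding U_def by simp
  have cardU: "card U = x" unfolding U_def using card_image[OF inj] by simp
  have cardV: "card V = s" unfolding V_def using card_Diff_subset[OF finU UN] cardU by (simp add: N_def)
  have VN: "V \<subseteq> {1..N}" by (auto simp: V_def)
  have finV: "finite V" by (simp add: V_def)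
  have split1: "prod f {1..N} = prod f ({1..N} - U) * prod f U"
    by (rule prod.subset_diff[OF UN]) simp
  have Uprod: "prod f U = (\<Prod>j<x. f (h j))" unfolding U_def by (simp add: prod.reindex[OF inj])
  have split2: "prod f {1..N} = prod f {1..s} * (\<Prod>j<x. f (s + x - j))" unfolding N_def by (rule prod_split_range)
  define K where "K = (\<Prod>j<x. f (s + x - j))"
  define Up where "Up = (\<Prod>j<x. f (h j))"
  have Rr_eq: "Rr (-(1/q)) x mu = K / Up"
    unfolding Rr_def K_def Up_def prod_dividef f_def h_def c_def s_def r_def by simp
  have Kp: "0 < K" unfolding K_def using s1 by (intro prod_pos fpos) auto
  have Upp: "0 < Up" unfolding Up_def h_def by (intro prod_pos fpos) auto
  have Vp: "0 < prod f V" using VN by (intro prod_pos fpos) auto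
  have Ap: "0 < prod f {1..s}" by (intro prod_pos fpos) auto
  have eq: "Up * prod f V = prod f {1..s} * K"
    using split1 split2 Uprod unfolding V_def K_def Up_def by (simp add: mult.commute)
  have key: "prod f {1..s} \<le> q * prod f V"
  proof (cases "s = 1")
    case True
    then obtain v where v: "V = {v}" using cardV by (auto simp: card_Suc_eq)
    then have v1: "v \<ge> 1" using VN by auto
    have fb: "f v \<ge> 1 - (if even v then r ^ v else 0)" unfolding f_def by (rule phi_ge_even_bound[OF r0 r2 v1])
    have fv: "f v \<ge> 1 - r^2"
    proof (cases "even v")
      case True
      have "v \<ge> 2" using True v1 by presburger
      then have "r ^ v \<le> r ^ 2" by (rule power_decreasing) (use r0 r2 in auto)
      then show ?thesis using fb True by simp
    next
      case False
      have "0 \<le> r^2" by simp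
      moreover have "f v \<ge> 1" using fb False by simp
      ultimately show ?thesis by linarith
    qed
    have "prod f {1..s} = 1 + r" using True by (simp add: f_def phi_def)
    moreover have "q * (1 - r^2) = q - r" using qr by (simp add: power2_eq_square algebra_simps)
    moreover have "q * (1 - r^2) \<le> q * f v" using fv q2 by (intro mult_left_mono) auto
    ultimately show ?thesis using v q2 r2 by simp
  next
    case False
    then have s2: "s \<ge> 2" using s1 by simp
    have "prod f V \<ge> 1 - (\<Sum>v\<in>{v\<in>V. even v}. r ^ v)"
      unfolding f_def by (rule LV[OF finV _ r0 r2]) (use VN in auto)
    moreover have "(\<Sum>v\<in>{v\<in>V. even v}. r ^ v) \<le> r^2 / (1 - r^2)"
      by (rule GS[OF VN r0]) (use r2 in auto)
    ultimately have "prod f V \<ge> 1 - r^2 / (1 - r^2)" by linarith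
    then have "q * prod f V \<ge> q * (1 - r^2 / (1 - r^2))" using q2 by (intro mult_left_mono) auto
    moreover have "q * (1 - r^2 / (1 - r^2)) \<ge> (1 + r) * (1 - r^2) * ((1 + r^3) * (1 + r^5))"
      unfolding r_def by (rule numeric[OF q])
    moreover have "prod f {1..s} \<le> (1 + r) * (1 - r^2) * ((1 + r^3) * (1 + r^5))"
      unfolding f_def by (rule UB[OF r0 r2 s2])
    ultimately show ?thesis by linarith
  qed
  have "Up * prod f V \<le> (q * K) * prod f V"
    unfolding eq using mult_right_mono[OF key less_imp_le[OF Kp]] by (simp add: mult_ac)
  then have "Up \<le> q * K" using Vp by (simp add: mult_le_cancel_right_pos)
  then show ?thesis unfolding Rr_eq using Upp by (simp add: field_simps)
qed

fun Ef :: "nat list \<Rightarrow> nat" where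
  "Ef [] = 0" | "Ef (x#mu) = x * sum_list mu + Ef mu"
fun Tf :: "nat list \<Rightarrow> nat" where
  "Tf [] = 0" | "Tf (x#mu) = (if 2 \<le> x then 1 else 0) + Tf mu"
definition sumsq :: "nat list \<Rightarrow> nat" where "sumsq mu = sum_list (map (\<lambda>p. p * p) mu)"

lemma F1: "2 * Ef mu + sumsq mu = (sum_list mu)^2"
  by (induction mu) (auto simp: sumsq_def power2_eq_square algebra_simps)

lemma F2: "\<forall>p\<in>set mu. p \<le> x \<Longrightarrow> sumsq mu \<le> x * sum_list mu"
  by (induction mu) (auto simp: sumsq_def algebra_simps intro!: add_mono mult_right_mono)

lemma F3: "\<forall>p\<in>set mu. 0 < p \<Longrightarrow> 2 * Tf mu \<le> sum_list mu"
  by (induction mu) auto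

lemma F5: "\<forall>p\<in>set mu. 0 < p \<Longrightarrow> Tf mu + length mu \<le> sum_list mu"
  by (induction mu) auto

lemma F_ones: "\<forall>p\<in>set mu. p \<le> 1 \<Longrightarrow> Tf mu = 0"
  by (induction mu) auto

lemma F4: "\<forall>p\<in>set mu. 0 < p \<Longrightarrow> length mu \<ge> 2 \<Longrightarrow> sum_list mu \<le> Ef mu + 1"
proof (induction mu)
  case Nil then show ?case by simp
next
  case (Cons a nu)
  show ?case
  proof (cases "length nu \<ge> 2")
    case True
    then have "sum_list nu \<le> Ef nu + 1" using Cons by auto
    moreover have "sum_list nu \<ge> 1" using True Cons.prems F5[of nu] by auto
    moreover have "a * sum_list nu \<ge> a" using \<open>sum_list nu \<ge> 1\<close> by simp
    moreover have "Ef (a#nu) = a * sum_list nu + Ef nu" "sum_list (a#nu) = a + sum_list nu" by simp_all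
    ultimately show ?thesis by linarith
  next
    case False
    then obtain b where nu: "nu = [b]" using Cons.prems by (cases nu) (auto simp: le_Suc_eq)
    have "a \<ge> 1" "b \<ge> 1" using Cons.prems nu by auto
    then obtain a' b' where "a = a' + 1" "b = b' + 1" by (metis add.commute le_Suc_ex Suc_eq_plus1)
    then have "a * b + 1 \<ge> a + b" by (simp add: algebra_simps)
    then show ?thesis using nu by simp
  qed
qed

lemma comb:
  assumes pos: "\<forall>p\<in>set (x#mu). 0 < p" and srt: "sorted_wrt (\<ge>) (x#mu)"
    and half: "2 * x \<le> x + sum_list mu" and nr: "mu \<noteq> [x]" and n221: "x#mu \<noteq> [2,2,1]"
  shows "(x + sum_list mu)^2 + 4 * Tf (x#mu) \<le> 4 * Ef (x#mu)"
proof -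
  define s where "s = sum_list mu"
  have xs: "x \<le> s" using half by (simp add: s_def)
  have x1: "x \<ge> 1" using pos by auto
  have posmu: "\<forall>p\<in>set mu. 0 < p" using pos by auto
  have lex: "\<forall>p\<in>set mu. p \<le> x" using srt by auto
  have f1: "2 * Ef mu + sumsq mu = s^2" using F1 s_def by simp
  have f2: "sumsq mu \<le> x * s" using F2[OF lex] s_def by simp
  have f3: "2 * Tf mu \<le> s" using F3[OF posmu] s_def by simp
  have goal: "(s - x)^2 + 4 * (if 2 \<le> x then 1 else 0) + 4 * Tf mu \<le> 4 * Ef mu \<Longrightarrow> ?thesis"
  proof -
    assume h: "(s - x)^2 + 4 * (if 2 \<le> x then 1 else 0) + 4 * Tf mu \<le> 4 * Ef mu"
    obtain d where "s = x + d" using xs le_Suc_ex by blast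
    then have "(x + s)^2 = (s - x)^2 + 4 * x * s"
      by (simp add: power2_eq_square algebra_simps)
    then show ?thesis using h by (simp add: s_def algebra_simps)
  qed
  show ?thesis
  proof (rule goal)
    show "(s - x)^2 + 4 * (if 2 \<le> x then 1 else 0) + 4 * Tf mu \<le> 4 * Ef mu"
    proof (cases "x = 1")
      case True
      then have "Tf mu = 0" using lex F_ones by auto
      moreover have "2 * Ef mu + s \<ge> s^2" using f1 f2 True by simp
      moreover have "s \<ge> 1" using xs True by simp
      moreover obtain t where t: "s = t + 1" using \<open>s \<ge> 1\<close> by (metis add.commute le_Suc_ex Suc_eq_plus1)
      ultimately have "2 * Ef mu + t + 1 \<ge> t * t + 2 * t + 1" by (simp add: power2_eq_square algebra_simps)
      then have "4 * Ef mu \<ge> t * t" by linarith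
      then show ?thesis using True \<open>Tf mu = 0\<close> t by (simp add: power2_eq_square)
    next
      case False
      then have x2: "x \<ge> 2" using x1 by simp
      consider "s = x" | "s = x + 1" | "s \<ge> x + 2" using xs by linarith
      then show ?thesis
      proof cases
        case 1
        have "length mu \<ge> 2"
        proof (rule ccontr)
          assume "\<not> length mu \<ge> 2"
          then have "length mu = 0 \<or> length mu = 1" by linarith
          then consider "mu = []" | a where "mu = [a]"
            by (metis One_nat_def length_0_conv length_Suc_conv)
          then show False using 1 x1 nr s_def by cases auto
        qed
        then have "s \<le> Ef mu + 1" "Tf mu + 2 \<le> s" using F4[OF posmu] F5[OF posmu] s_def by auto
        then show ?thesis using 1 x2 by simp
      next
        case 2
        obtain a nu where mu: "mu = a # nu" using 2 s_def by (cases mu) auto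
        have ax: "a \<le> x" using lex mu by auto
        have posnu: "\<forall>p\<in>set nu. 0 < p" using posmu mu by auto
        define b where "b = sum_list nu"
        have sab: "s = a + b" using mu s_def b_def by simp
        have E: "Ef mu = a * b + Ef nu" using mu b_def by simp
        have T: "Tf mu = (if 2 \<le> a then 1 else 0) + Tf nu" using mu by simp
        have a1: "a \<ge> 1" using posmu mu by auto
        have key: "Tf mu + 2 \<le> Ef mu"
        proof (cases "length nu \<ge> 2")
          case True
          have h1: "b \<le> Ef nu + 1" "Tf nu + 2 \<le> b" using F4[OF posnu True] F5[OF posnu] True b_def by auto
          have ab: "a * b \<ge> 2 * a" using h1(2) by simp
          have T': "Tf mu \<le> 1 + Tf nu" using T by simp
          show ?thesis
          proof (cases "2 \<le> a")
            case True then show ?thesis using h1 ab E T' by linarith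
          next
            case False
            then have "Tf mu = Tf nu" using T by simp
            moreover have "a * b \<ge> b" using a1 by simp
            ultimately show ?thesis using h1 E by linarith
          qed
        next
          case False
          have "nu \<noteq> []" using 2 sab ax b_def by auto
          then have "length nu \<noteq> 0" by simp
          then have "length nu = 1" using False by linarith
          then obtain c where nu: "nu = [c]" by (metis One_nat_def length_0_conv length_Suc_conv)
          have ca: "c \<le> a" using srt mu nu by auto
          have c1: "c \<ge> 1" using posnu nu by auto
          have bc: "b = c" using nu b_def by simp
          show ?thesis
          proof (cases "c = 1")
            case True
            then have "a = x" using 2 sab bc by simp
            then have "a \<ge> 3" using n221 mu nu True x2 by (cases "a = 2") auto
            then show ?thesis using E T nu bc True by simp
          next
            case False
            then have "c \<ge> 2" "a \<ge> 2" using c1 ca by auto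
            then have "a * c \<ge> 2 * 2" by (intro mult_le_mono) auto
            then show ?thesis using E T nu bc by simp
          qed
        qed
        show ?thesis using 2 key x2 by simp
      next
        case 3
        obtain e where sd: "s = x + (e + 2)" using 3 by (metis add.assoc le_Suc_ex add.commute)
        have "2 * Ef mu + x * s \<ge> s * s" using f1 f2 by (simp add: power2_eq_square)
        moreover have "s * s = x * s + (e + 2) * s" using sd by (simp add: algebra_simps)
        ultimately have e4: "2 * Ef mu \<ge> (e + 2) * s" by linarith
        have "s * (e + 1) \<ge> (e + 4) * (e + 1)" using sd x2 by (intro mult_right_mono) auto
        moreover have "(e + 2) * s = s * (e + 1) + s" by (simp add: algebra_simps)
        moreover have "(e + 4) * (e + 1) = e * e + 5 * e + 4" by (simp add: algebra_simps)
        moreover have "(s - x)^2 = e * e + 4 * e + 4" using sd by (simp add: power2_eq_square algebra_simps)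
        ultimately have A: "e * e + 5 * e + 4 \<le> s * e + s" and sq: "(s - x)^2 = e * e + 4 * e + 4"
          by (simp_all add: algebra_simps)
        have B: "s * e + 2 * s \<le> 2 * Ef mu" using e4 by (simp add: algebra_simps)
        have "2 \<le> x" by (rule x2)
        then show ?thesis unfolding sq using A B f3 by simp
      qed
    qed
  qed
qed

lemma bound_GL:
  assumes "(q::real) \<ge> 2"
  shows "sorted_wrt (\<ge>) lam \<Longrightarrow> \<forall>p\<in>set lam. 0 < p \<Longrightarrow> unip_degree 1 q lam \<ge> q ^ Ef lam"
proof (induction lam)
  case Nil then show ?case by (simp add: unip_Nil)
next
  case (Cons x mu)
  have IH: "unip_degree 1 q mu \<ge> q ^ Ef mu" using Cons by simp
  have R: "Rr (1/q) x mu \<ge> 1" by (rule Rr_GL[OF assms]) (use Cons.prems in auto)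
  have D: "unip_degree 1 q (x#mu) = q ^ (x * sum_list mu) * Rr (1/q) x mu * unip_degree 1 q mu"
    by (rule unip_Cons) (use Cons.prems assms in auto)
  have "q ^ Ef (x#mu) = q ^ (x * sum_list mu) * 1 * q ^ Ef mu" by (simp add: power_add)
  also have "\<dots> \<le> q ^ (x * sum_list mu) * Rr (1/q) x mu * unip_degree 1 q mu"
    using assms R IH by (intro mult_mono) auto
  finally show ?case using D by simp
qed

lemma Rr_U_step:
  assumes q: "q = 2 \<or> q \<ge> (3::real)" and srt: "sorted_wrt (\<ge>) (x#mu)" and pos: "\<forall>p\<in>set (x#mu). 0 < p"
  shows "Rr (-(1/q)) x mu * q ^ (if 2 \<le> x then 1 else 0) \<ge> 1"
proof -
  have t: "\<bar>-(1/q)\<bar> < 1" using q by auto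
  show ?thesis
  proof (cases "mu = []")
    case True
    then show ?thesis using Rr_Nil[OF t] q by auto
  next
    case False
    show ?thesis
    proof (cases "2 \<le> x")
      case True
      then show ?thesis using R_unitary[OF srt _ False q] pos by (simp add: mult.commute)
    next
      case False
      then have "x = 1" using pos by auto
      then have "\<forall>p\<in>set mu. p = 1" using srt pos by fastforce
      then show ?thesis using Rr_one[OF _ t] \<open>x = 1\<close> by simp
    qed
  qed
qed

lemma bound_U:
  assumes q: "q = 2 \<or> q \<ge> (3::real)"
  shows "sorted_wrt (\<ge>) lam \<Longrightarrow> \<forall>p\<in>set lam. 0 < p \<Longrightarrow> unip_degree (-1) q lam * q ^ Tf lam \<ge> q ^ Ef lam"
proof (induction lam)
  case Nil then show ?case by (simp add: unip_Nil)
next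
  case (Cons x mu)
  have q0: "q > 0" using q by auto
  have IH: "unip_degree (-1) q mu * q ^ Tf mu \<ge> q ^ Ef mu" using Cons by simp
  have R: "Rr (-(1/q)) x mu * q ^ (if 2 \<le> x then 1 else 0) \<ge> 1"
    by (rule Rr_U_step[OF q Cons.prems])
  have D: "unip_degree (-1) q (x#mu) = q ^ (x * sum_list mu) * Rr ((-1)/q) x mu * unip_degree (-1) q mu"
    by (rule unip_Cons) (use Cons.prems q0 in auto)
  have "q ^ Ef (x#mu) = q ^ (x * sum_list mu) * 1 * q ^ Ef mu" by (simp add: power_add)
  also have "\<dots> \<le> q ^ (x * sum_list mu) * (Rr (-(1/q)) x mu * q ^ (if 2 \<le> x then 1 else 0))
       * (unip_degree (-1) q mu * q ^ Tf mu)"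
    using q0 R IH by (intro mult_mono) auto
  also have "\<dots> = unip_degree (-1) q (x#mu) * q ^ Tf (x#mu)"
    unfolding D by (simp add: power_add mult_ac)
  finally show ?case .
qed

lemma rect_U:
  assumes q: "q = 2 \<or> q \<ge> (3::real)" and m: "m \<ge> 1"
  shows "unip_degree (-1) q [m, m] \<ge> q ^ (m * m)"
proof -
  define r where "r = 1/q"
  have r0: "0 < r" and r2: "r \<le> 1/2" using q by (auto simp: r_def)
  have q0: "q > 0" using q by auto
  have t: "\<bar>-(1/q)\<bar> < 1" using q by auto
  have D1: "unip_degree (-1) q [m] = 1"
    using unip_Cons[of m "[]" q "-1"] q0 Rr_Nil[OF t] by (simp add: unip_Nil)
  have D2: "unip_degree (-1) q [m, m] = q ^ (m * m) * Rr (-r) m [m]"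
    using unip_Cons[of m "[m]" q "-1"] q0 D1 m by (simp add: r_def)
  have c: "conj_part [m] j = 1" if "j < m" for j using that by (simp add: conj_part_Cons)
  define g where "g k = phi (-r) (2 + (m - 1) + k)" for k
  define g' where "g' k = phi (-r) (2 + k)" for k
  have num: "(\<Prod>j<m. phi (-r) (m + m - j)) = (\<Prod>k<m. g k)"
  proof -
    have "(\<Prod>j<m. phi (-r) (m + m - j)) = (\<Prod>j<m. g (m - Suc j))"
    proof (rule prod.cong)
      fix j assume "j \<in> {..<m}"
      then have eq: "m + m - j = 2 + (m - 1) + (m - Suc j)" by auto
      show "phi (-r) (m + m - j) = g (m - Suc j)" unfolding g_def by (subst eq) (rule refl)
    qed simp
    then show ?thesis by (simp add: prod.nat_diff_reindex)
  qed
  have den: "(\<Prod>j<m. phi (-r) (m - j + conj_part [m] j)) = (\<Prod>k<m. g' k)"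
  proof -
    have "(\<Prod>j<m. phi (-r) (m - j + conj_part [m] j)) = (\<Prod>j<m. g' (m - Suc j))"
    proof (rule prod.cong)
      fix j assume j: "j \<in> {..<m}"
      then have eq: "m - j + conj_part [m] j = 2 + (m - Suc j)" using c[of j] by auto
      show "phi (-r) (m - j + conj_part [m] j) = g' (m - Suc j)" unfolding g'_def by (subst eq) (rule refl)
    qed simp
    then show ?thesis by (simp add: prod.nat_diff_reindex)
  qed
  have R: "Rr (-r) m [m] = (\<Prod>k<m. g k) / (\<Prod>k<m. g' k)"
    unfolding Rr_def prod_dividef using num den by simp
  have ge: "(\<Prod>k<m. g k) \<ge> (\<Prod>k<m. g' k)"
    unfolding g_def g'_def by (rule shift_prod[OF r0 r2]) auto
  have pos: "(\<Prod>k<m. g' k) > 0" unfolding g'_def by (intro prod_pos phi_pos_r[OF r0 r2]) auto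
  have "Rr (-r) m [m] \<ge> 1" unfolding R using ge pos by simp
  then show ?thesis unfolding D2 using q0 by simp
qed

lemma n221_U:
  assumes q: "q = 2 \<or> q \<ge> (3::real)"
  shows "unip_degree (-1) q [2, 2, 1] \<ge> q ^ 7"
proof -
  define r where "r = 1/q"
  have r0: "0 < r" and r2: "r \<le> 1/2" using q by (auto simp: r_def)
  have q0: "q > 0" using q by auto
  have t: "\<bar>-(1/q)\<bar> < 1" using q by auto
  have D1: "unip_degree (-1) q [1] = 1"
    using unip_Cons[of 1 "[]" q "-1"] q0 Rr_Nil[OF t] by (simp add: unip_Nil)
  have D2: "unip_degree (-1) q [2, 1] = q ^ 2 * Rr (-r) 2 [1]"
    using unip_Cons[of 2 "[1]" q "-1"] q0 D1 by (simp add: r_def)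
  have D3: "unip_degree (-1) q [2, 2, 1] = q ^ 6 * Rr (-r) 2 [2, 1] * unip_degree (-1) q [2, 1]"
    using unip_Cons[of 2 "[2,1]" q "-1"] q0 by (simp add: r_def)
  have R2: "q * Rr (-r) 2 [1] \<ge> 1" using R_unitary[of 2 "[1]" q] q by (simp add: r_def)
  have R3: "Rr (-r) 2 [2, 1] = phi (-r) 5 / phi (-r) 4 * (phi (-r) 4 / phi (-r) 2)"
    by (simp add: Rr_def lessThan_Suc conj_part_Cons numeral_2_eq_2 eval_nat_numeral)
  have p4: "phi (-r) 4 > 0" "phi (-r) 2 > 0" using phi_pos_r[OF r0 r2] by auto
  have "phi (-r) 5 \<ge> 1" "phi (-r) 2 \<le> 1" using r0 by (simp_all add: phi_def)
  then have R3': "Rr (-r) 2 [2, 1] \<ge> 1" unfolding R3 using p4 by simp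
  have "q ^ 7 = q ^ 6 * 1 * (q ^ 2 * (1 / q))" using q0 by (simp add: power_eq_if)
  also have "\<dots> \<le> q ^ 6 * Rr (-r) 2 [2, 1] * (q ^ 2 * Rr (-r) 2 [1])"
  proof -
    have "1/q \<le> Rr (-r) 2 [1]" using R2 q0 by (simp add: field_simps mult.commute)
    then show ?thesis using R3' q0 by (intro mult_mono) auto
  qed
  finally show ?thesis unfolding D3 D2 .
qed

theorem lemma6p5:
  fixes n :: nat and eps :: real and p k :: nat and lam :: "nat list"
  assumes "n \<ge> 2"
    and "eps = 1 \<or> eps = -1"
    and "prime p" and "k \<ge> 1"
    and "is_partition lam n"
    and "2 * hd lam \<le> n"
  shows "unip_degree eps (real (p ^ k)) lam \<ge> real (p ^ k) powr (real n ^ 2 / 4)"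
proof -
  define q where "q = real (p ^ k)"
  have pk: "p ^ k \<ge> 2"
  proof -
    have "p \<ge> 2" using assms(3) by (simp add: prime_ge_2_nat)
    then have "p ^ 1 \<le> p ^ k" using assms(4) by (intro power_increasing) auto
    then show ?thesis using \<open>p \<ge> 2\<close> by simp
  qed
  have q: "q = 2 \<or> q \<ge> 3"
  proof (cases "p ^ k = 2")
    case True then show ?thesis by (simp add: q_def)
  next
    case False then have "p ^ k \<ge> 3" using pk by simp
    then show ?thesis unfolding q_def by (metis of_nat_le_iff of_nat_numeral)
  qed
  have q2: "q \<ge> 2" using q by auto
  have srt: "sorted_wrt (\<ge>) lam" and pos: "\<forall>p\<in>set lam. 0 < p" and sn: "sum_list lam = n"
    using assms(5) by (auto simp: is_partition_def)
  obtain x mu where lam: "lam = x # mu" using sn assms(1) by (cases lam) auto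
  define s where "s = sum_list mu"
  have n: "n = x + s" using sn lam s_def by simp
  have half: "2 * x \<le> x + s" using assms(6) lam n by simp
  have lex: "\<forall>p\<in>set lam. p \<le> x" using srt lam by auto
  have pw: "q powr (real n ^ 2 / 4) \<le> q ^ N" if "real n ^ 2 / 4 \<le> real N" for N
  proof -
    have "q powr (real n ^ 2 / 4) \<le> q powr (real N)" by (rule powr_mono[OF that]) (use q2 in auto)
    also have "\<dots> = q ^ N" using q2 by (simp add: powr_realpow)
    finally show ?thesis .
  qed
  have E4: "n^2 \<le> 4 * Ef lam"
  proof -
    have "2 * Ef lam + sumsq lam = n^2" using F1[of lam] sn by simp
    moreover have "sumsq lam \<le> x * n" using F2[OF lex] sn by simp
    moreover have "2 * (x * n) \<le> n * n"
    proof -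
      have "(2 * x) * n \<le> n * n" using half n by (intro mult_right_mono) auto
      then show ?thesis by (simp add: mult.assoc)
    qed
    ultimately have "n * n \<le> 4 * Ef lam" unfolding power2_eq_square by linarith
    then show ?thesis by (simp add: power2_eq_square)
  qed
  show ?thesis
    using assms(2)
  proof
    assume e: "eps = 1"
    have "unip_degree 1 q lam \<ge> q ^ Ef lam" by (rule bound_GL[OF q2 srt pos])
    moreover have "real n ^ 2 / 4 \<le> real (Ef lam)"
    proof -
      have "real (n^2) \<le> real (4 * Ef lam)" using E4 by (simp only: of_nat_le_iff)
      then show ?thesis by simp
    qed
    ultimately show ?thesis using pw e unfolding q_def by fastforce
  next
    assume e: "eps = -1"
    show ?thesis
    proof (cases "mu = [x]")
      case True
      have "unip_degree (-1) q [x, x] \<ge> q ^ (x * x)" by (rule rect_U[OF q]) (use pos lam in auto)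
      moreover have "n = 2 * x" using True n s_def by simp
      then have "real n ^ 2 / 4 \<le> real (x * x)" by (simp add: power2_eq_square)
      ultimately show ?thesis using pw e True lam unfolding q_def by fastforce
    next
      case nr: False
      show ?thesis
      proof (cases "lam = [2, 2, 1]")
        case True
        then have "n = 5" using sn by simp
        then have "real n ^ 2 / 4 \<le> real (7::nat)" by simp
        then show ?thesis using pw n221_U[OF q] e True unfolding q_def by fastforce
      next
        case False
        have c: "(x + s)^2 + 4 * Tf lam \<le> 4 * Ef lam"
          unfolding lam s_def by (rule comb) (use pos srt half nr False lam s_def in auto)
        then have TE: "Tf lam \<le> Ef lam" by simp
        have B: "unip_degree (-1) q lam * q ^ Tf lam \<ge> q ^ Ef lam" by (rule bound_U[OF q srt pos])
        have "q ^ Ef lam = q ^ (Ef lam - Tf lam) * q ^ Tf lam" using TE by (simp add: power_add[symmetric])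
        then have "q ^ (Ef lam - Tf lam) \<le> unip_degree (-1) q lam" using B q2 by simp
        moreover have "real n ^ 2 / 4 \<le> real (Ef lam - Tf lam)"
        proof -
          have "n^2 \<le> 4 * (Ef lam - Tf lam)" using c n TE by (simp add: diff_mult_distrib2)
          then have "real (n^2) \<le> real (4 * (Ef lam - Tf lam))" by (simp only: of_nat_le_iff)
          then show ?thesis by simp
        qed
        ultimately show ?thesis using pw e unfolding q_def by fastforce
      qed
    qed
  qed
qed

end
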